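(* Let $l\ge1$ and work in $\mathfrak{OA}_{1,2l}=\mathfrak{OA}/\mathfrak I_{(t-1)^{2l}}$, writing $X_k,Y_k$ for the images. Set $H_0=\tfrac12X_0$, $E_0=\tfrac14Y_1+\tfrac18\big(X_1-\sum_{k=1}^{2l-1}(-1)^kX_k\big)$, $F_0=\tfrac14Y_1-\tfrac18\big(X_1-\sum_{k=1}^{2l-1}(-1)^kX_k\big)$, $H_1=[E_0,F_0]$, and inductively $E_{j+1}=\tfrac12[H_1,E_j]$, $F_{j+1}=-\tfrac12[H_1,F_j]$ for $0\le j\le l-2$. Then: (i) $[E_{j+1},F_{k-1}]=[E_j,F_k]$ whenever $0\le j\le l-2$ and $1\le k\le l-1$; hence $H_m:=[E_j,F_k]$ with $j+k+1=m$ ($0\le j,k\le l-1$) is well defined for $1\le m\le 2l-1$, and agrees with $H_1$ for $m=1$. (ii) $\{E_j,F_j,H_j:0\le j\le l-1\}$ is a basis of $\mathfrak{OA}_{1,2l}$, and $H_m=0$ for $l\le m\le 2l-1$. (iii) For $0\le j,k\le l-1$: $[E_j,F_k]=H_{j+k+1}$, $[H_j,E_k]=2E_{j+k}$, $[H_j,F_k]=-2F_{j+k}$, $[E_j,E_k]=0$, $[F_j,F_k]=0$, where any $E_m,F_m,H_m$ with $m\ge l$ is interpreted as $0$.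
   Context: Work over $\mathbb C$. $\mathfrak{sl}_2$ has basis $e,f,h$ with $[e,f]=h$, $[h,e]=2e$, $[h,f]=-2f$. The Onsager algebra is the Lie subalgebra $\mathfrak{OA}=\{p(t)e+p(t^{-1})f+q(t)h:\ p,q\in\mathbb C[t,t^{-1}],\ q(t^{-1})=-q(t)\}$ of the loop algebra $\mathbb C[t,t^{-1}]\otimes\mathfrak{sl}_2$ (bracket $[px,qy]=pq[x,y]$). $\mathfrak I_{(t-1)^L}=\{p(t)e+p(t^{-1})f+q(t)h\in\mathfrak{OA}: p,q\in(t-1)^L\mathbb C[t,t^{-1}]\}$. For $k\ge0$, $X_k=2(t-1)^ke+2(t^{-1}-1)^kf$ and $Y_k=(-1)^k\big((t-1)^k-(t^{-1}-1)^k\big)h$, elements of $\mathfrak{OA}$. *)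

theory Defs
  imports Complex_Main "HOL-Library.Poly_Mapping" "HOL-Library.Product_Plus"
begin

text \<open>Laurent polynomials C[t,t^-1] as finitely supported functions int to complex
  (convolution product).\<close>
type_synonym lpoly = "int \<Rightarrow>\<^sub>0 complex"

definition lt :: lpoly where "lt = Poly_Mapping.single 1 1"
definition ltinv :: lpoly where "ltinv = Poly_Mapping.single (-1) 1"
definition lconst :: "complex \<Rightarrow> lpoly" where "lconst c = Poly_Mapping.single 0 c"

definition linv :: "lpoly \<Rightarrow> lpoly" where "linv p = Poly_Mapping.map_key uminus p"

text \<open>Elements of the loop algebra C[t,t^-1] (x) sl2: a triple (a,b,c) stands for
  a e + b f + c h.\<close>
type_synonym loop = "lpoly \<times> lpoly \<times> lpoly"

definition lsmul :: "complex \<Rightarrow> loop \<Rightarrow> loop" where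
  "lsmul z x = (case x of (a,b,c) \<Rightarrow> (lconst z * a, lconst z * b, lconst z * c))"

text \<open>Bracket from [e,f]=h, [h,e]=2e, [h,f]=-2f extended C[t,t^-1]-bilinearly.\<close>
definition lbr :: "loop \<Rightarrow> loop \<Rightarrow> loop" where
  "lbr x y = (case x of (a,b,c) \<Rightarrow> case y of (a',b',c') \<Rightarrow>
     (2 * (c * a' - a * c'), 2 * (b * c' - c * b'), a * b' - b * a'))"

definition OA :: "loop set" where
  "OA = {(p, p', q). p' = linv p \<and> linv q = - q}"

definition Iid :: "nat \<Rightarrow> loop set" where
  "Iid L = {(p, p', q) \<in> OA. (lt - 1) ^ L dvd p \<and> (lt - 1) ^ L dvd q}"

definition Xe :: "nat \<Rightarrow> loop" where
  "Xe k = (2 * (lt - 1) ^ k, 2 * (ltinv - 1) ^ k, 0)"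

definition Ye :: "nat \<Rightarrow> loop" where
  "Ye k = (0, 0, (-1) ^ k * ((lt - 1) ^ k - (ltinv - 1) ^ k))"

text \<open>Representatives in OA of the elements of OA/I_{(t-1)^{2l}}.\<close>
definition H0 :: loop where "H0 = lsmul (1/2) (Xe 0)"

definition Xsum :: "nat \<Rightarrow> loop" where
  "Xsum l = Xe 1 - (\<Sum>k\<in>{1..2*l-1}. lsmul ((-1) ^ k) (Xe k))"

definition E0 :: "nat \<Rightarrow> loop" where
  "E0 l = lsmul (1/4) (Ye 1) + lsmul (1/8) (Xsum l)"
definition F0 :: "nat \<Rightarrow> loop" where
  "F0 l = lsmul (1/4) (Ye 1) - lsmul (1/8) (Xsum l)"

definition H1 :: "nat \<Rightarrow> loop" where "H1 l = lbr (E0 l) (F0 l)"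

fun Eg :: "nat \<Rightarrow> nat \<Rightarrow> loop" where
  "Eg l 0 = E0 l"
| "Eg l (Suc j) = lsmul (1/2) (lbr (H1 l) (Eg l j))"

fun Fg :: "nat \<Rightarrow> nat \<Rightarrow> loop" where
  "Fg l 0 = F0 l"
| "Fg l (Suc j) = lsmul (-1/2) (lbr (H1 l) (Fg l j))"

text \<open>H_0 = X_0/2; for m >= 1, H_m = [E_j,F_k] with the canonical choice
  j = min (m-1) (l-1), k = m-1-j (well-definedness is part (i) of the theorem).\<close>
definition Hg :: "nat \<Rightarrow> nat \<Rightarrow> loop" where
  "Hg l m = (if m = 0 then H0 else
     (let j = min (m - 1) (l - 1) in lbr (Eg l j) (Fg l (m - 1 - j))))"

definition Et :: "nat \<Rightarrow> nat \<Rightarrow> loop" where "Et l m = (if m < l then Eg l m else 0)"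
definition Ft :: "nat \<Rightarrow> nat \<Rightarrow> loop" where "Ft l m = (if m < l then Fg l m else 0)"
definition Ht :: "nat \<Rightarrow> nat \<Rightarrow> loop" where "Ht l m = (if m < l then Hg l m else 0)"

definition qeq :: "nat \<Rightarrow> loop \<Rightarrow> loop \<Rightarrow> bool" where
  "qeq l x y \<longleftrightarrow> x - y \<in> Iid (2 * l)"

end

theory Submission
  imports Defs
begin
lemma lp_decomp: "(p::lpoly) = (\<Sum>k\<in>Poly_Mapping.keys p. Poly_Mapping.single k (Poly_Mapping.lookup p k))"
proof (rule poly_mapping_eqI)
  fix k
  show "Poly_Mapping.lookup p k = Poly_Mapping.lookup (\<Sum>k\<in>Poly_Mapping.keys p. Poly_Mapping.single k (Poly_Mapping.lookup p k)) k"
    by (cases "k \<in> Poly_Mapping.keys p") (auto simp: lookup_sum lookup_single when_def in_keys_iff)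
qed

lemma lp_induct[case_names zero single add]:
  assumes "P 0" "\<And>k c. P (Poly_Mapping.single k c)" "\<And>a b. P a \<Longrightarrow> P b \<Longrightarrow> P (a + b)"
  shows "P (p::lpoly)"
proof -
  have "P (\<Sum>k\<in>K. Poly_Mapping.single k (Poly_Mapping.lookup p k))" if "finite K" for K
    using that by (induction K rule: finite_induct) (auto intro: assms)
  then show ?thesis by (subst lp_decomp) simp
qed

lemma inj_uminus_int: "inj (uminus :: int \<Rightarrow> int)" by (simp add: inj_def)

lemma linv_add[simp]: "linv (a + b) = linv a + linv b"
  unfolding linv_def by (rule map_key_plus[OF inj_uminus_int])
lemma linv_zero[simp]: "linv 0 = 0"
  unfolding linv_def by (rule map_key_zero[OF inj_uminus_int])
lemma linv_single[simp]: "linv (Poly_Mapping.single k c) = Poly_Mapping.single (-k) c"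
  unfolding linv_def using map_key_single[OF inj_uminus_int, of "-k" c] by simp
lemma linv_uminus[simp]: "linv (- a) = - linv a"
proof -
  have "linv (- a) + linv a = 0" by (metis linv_add linv_zero add.left_inverse)
  then show ?thesis by (simp add: eq_neg_iff_add_eq_0)
qed
lemma linv_diff[simp]: "linv (a - b) = linv a - linv b"
  by (metis diff_conv_add_uminus linv_add linv_uminus)
lemma linv_mult[simp]: "linv (a * b) = linv a * linv b"
proof (induction a rule: lp_induct)
  case zero then show ?case by simp
next
  case (single k c)
  show ?case
  proof (induction b rule: lp_induct)
    case (single k' c') then show ?case by (simp add: mult_single)
  qed (simp_all add: distrib_left)
next
  case (add a b) then show ?case by (simp add: distrib_right)
qed
lemma linv_one[simp]: "linv 1 = 1"
  by (metis linv_single single_one minus_zero)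
lemma linv_linv[simp]: "linv (linv a) = a"
  by (induction a rule: lp_induct) simp_all
lemma linv_power[simp]: "linv (a ^ n) = linv a ^ n"
  by (induction n) simp_all
lemma linv_sum: "linv (sum f A) = (\<Sum>x\<in>A. linv (f x))"
  by (induction A rule: infinite_finite_induct) simp_all
lemma linv_numeral[simp]: "linv (numeral n) = numeral n"
  by (metis linv_single single_numeral minus_zero)
lemma linv_lconst[simp]: "linv (lconst c) = lconst c"
  unfolding lconst_def by simp
lemma linv_lt[simp]: "linv lt = ltinv" unfolding lt_def ltinv_def by simp
lemma linv_ltinv[simp]: "linv ltinv = lt" unfolding lt_def ltinv_def by simp
lemma lt_ltinv[simp]: "lt * ltinv = 1" unfolding lt_def ltinv_def by (simp add: mult_single)
lemma ltinv_lt[simp]: "ltinv * lt = 1" using lt_ltinv by (simp add: mult.commute)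

lemma lconst_mult: "lconst (a * b) = lconst a * lconst b" unfolding lconst_def by (simp add: mult_single)
lemma lconst_add: "lconst (a + b) = lconst a + lconst b" unfolding lconst_def by (simp add: single_add)
lemma lconst_diff: "lconst (a - b) = lconst a - lconst b" unfolding lconst_def by (simp add: single_diff)
lemma lconst_uminus: "lconst (- a) = - lconst a" unfolding lconst_def by (simp add: single_uminus)
lemma lconst_one[simp]: "lconst 1 = 1" unfolding lconst_def by simp
lemma lconst_zero[simp]: "lconst 0 = 0" unfolding lconst_def by simp
lemma lconst_numeral[simp]: "lconst (numeral n) = numeral n" unfolding lconst_def by simp
lemma lconst_power: "lconst (a ^ n) = lconst a ^ n" by (induction n) (simp_all add: lconst_mult)
lemma lconst_sum: "lconst (sum f A) = (\<Sum>x\<in>A. lconst (f x))"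
  by (induction A rule: infinite_finite_induct) (simp_all add: lconst_add)

definition ev1 :: "lpoly \<Rightarrow> complex" where
  "ev1 p = (\<Sum>k\<in>Poly_Mapping.keys p. Poly_Mapping.lookup p k)"
lemma ev1_add[simp]: "ev1 (a + b) = ev1 a + ev1 b"
  unfolding ev1_def by (rule setsum_keys_plus_distrib[where f="\<lambda>k x. x"]) simp_all
lemma ev1_zero[simp]: "ev1 0 = 0" unfolding ev1_def by simp
lemma ev1_single[simp]: "ev1 (Poly_Mapping.single k c) = c"
  unfolding ev1_def by (cases "c = 0") simp_all
lemma ev1_uminus[simp]: "ev1 (- a) = - ev1 a"
proof -
  have "ev1 (- a) + ev1 a = 0" by (metis ev1_add ev1_zero add.left_inverse)
  then show ?thesis by (simp add: eq_neg_iff_add_eq_0)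
qed
lemma ev1_diff[simp]: "ev1 (a - b) = ev1 a - ev1 b"
  by (metis diff_conv_add_uminus ev1_add ev1_uminus)
lemma ev1_mult[simp]: "ev1 (a * b) = ev1 a * ev1 b"
proof (induction a rule: lp_induct)
  case zero then show ?case by simp
next
  case (single k c)
  show ?case
  proof (induction b rule: lp_induct)
    case (single k' c') then show ?case by (simp add: mult_single)
  qed (simp_all add: distrib_left)
next
  case (add a b) then show ?case by (simp add: distrib_right)
qed
lemma ev1_one[simp]: "ev1 1 = 1" by (metis ev1_single single_one)
lemma ev1_power[simp]: "ev1 (a ^ n) = ev1 a ^ n" by (induction n) simp_all
lemma ev1_numeral[simp]: "ev1 (numeral n) = numeral n" by (metis ev1_single single_numeral)
lemma ev1_lconst[simp]: "ev1 (lconst c) = c" unfolding lconst_def by simp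
lemma ev1_lt[simp]: "ev1 lt = 1" unfolding lt_def by simp
lemma ev1_ltinv[simp]: "ev1 ltinv = 1" unfolding ltinv_def by simp
lemma ev1_sum: "ev1 (sum f A) = (\<Sum>x\<in>A. ev1 (f x))"
  by (induction A rule: infinite_finite_induct) simp_all

lemma single_pow: "Poly_Mapping.single (int n) (1::complex) = lt ^ n"
proof (induction n)
  case (Suc n)
  have "lt ^ Suc n = lt * Poly_Mapping.single (int n) 1" using Suc by simp
  also have "\<dots> = Poly_Mapping.single (int (Suc n)) 1" by (simp add: lt_def mult_single)
  finally show ?case by simp
qed simp
lemma single_pow_neg: "Poly_Mapping.single (- int n) (1::complex) = ltinv ^ n"
proof (induction n)
  case (Suc n)
  have "ltinv ^ Suc n = ltinv * Poly_Mapping.single (- int n) 1" using Suc by simp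
  also have "\<dots> = Poly_Mapping.single (- int (Suc n)) 1" by (simp add: ltinv_def mult_single)
  finally show ?case by simp
qed simp
lemma single_lconst: "Poly_Mapping.single k c = lconst c * Poly_Mapping.single k 1"
  unfolding lconst_def by (simp add: mult_single)

lemma s_dvd_pow_diff: "(lt - 1) dvd (lt ^ n - 1)"
  by (metis power_diff_1_eq dvd_triv_left)
lemma s_dvd_powinv_diff: "(lt - 1) dvd (ltinv ^ n - 1)"
proof -
  have "ltinv ^ n - 1 = - (ltinv ^ n * (lt ^ n - 1))"
    by (simp add: algebra_simps power_mult_distrib[symmetric])
  then show ?thesis by (metis s_dvd_pow_diff dvd_minus_iff dvd_mult)
qed
lemma s_dvd_single: "(lt - 1) dvd (Poly_Mapping.single k 1 - 1)"
proof (cases "k \<ge> 0")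
  case True
  then obtain n where "k = int n" by (metis nonneg_eq_int)
  then show ?thesis by (simp add: single_pow s_dvd_pow_diff)
next
  case False
  then obtain n where "k = - int n" by (metis neg_int_cases linorder_not_le less_imp_le minus_minus nonneg_eq_int neg_0_le_iff_le)
  then show ?thesis by (simp add: single_pow_neg s_dvd_powinv_diff)
qed
lemma s_dvd_ev1: "(lt - 1) dvd (p - lconst (ev1 p))"
proof (induction p rule: lp_induct)
  case (single k c)
  have "Poly_Mapping.single k c - lconst (ev1 (Poly_Mapping.single k c)) = lconst c * (Poly_Mapping.single k 1 - 1)"
    by (subst single_lconst) (simp add: algebra_simps)
  then show ?case using s_dvd_single by simp
next
  case (add a b)
  have "a + b - lconst (ev1 (a + b)) = (a - lconst (ev1 a)) + (b - lconst (ev1 b))"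
    by (simp add: lconst_add)
  then show ?case using add by (metis dvd_add)
qed simp

abbreviation S :: lpoly where "S \<equiv> lt - 1"
definition W :: lpoly where "W = lt - ltinv"
definition V :: lpoly where "V = 1 + ltinv"

lemma W_SV: "W = S * V"
  unfolding W_def V_def by (simp add: algebra_simps)
lemma ev1_V[simp]: "ev1 V = 2" unfolding V_def by simp
lemma ev1_S[simp]: "ev1 S = 0" by simp
lemma linv_S: "linv S = - ltinv * S" by (simp add: algebra_simps)
lemma linv_W[simp]: "linv W = - W" unfolding W_def by simp
lemma S_nonzero: "S \<noteq> 0"
proof
  assume "S = 0"
  then have "Poly_Mapping.lookup lt 1 = Poly_Mapping.lookup (1::lpoly) 1" by simp
  then show False unfolding lt_def by (simp add: lookup_one)
qed

lemma dvd_linv: "S ^ N dvd x \<Longrightarrow> S ^ N dvd linv x"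
proof -
  assume "S ^ N dvd x"
  then obtain r where "x = S ^ N * r" by blast
  then have "linv x = (linv S) ^ N * linv r" by (simp only: linv_mult linv_power)
  also have "\<dots> = S ^ N * ((- ltinv) ^ N * linv r)" by (simp only: linv_S power_mult_distrib mult_ac)
  finally show ?thesis by simp
qed


lemma ab4: "(x::'a::ab_group_add) + y - (A + B) = (x - A) + (y - B)" by (simp add: algebra_simps)

definition Msp :: "nat \<Rightarrow> lpoly set" where
  "Msp N = {x. \<exists>c. S ^ N dvd (x - (\<Sum>i<N. lconst (c i) * W ^ i))}"


lemma Msp_dvd: "S ^ N dvd x \<Longrightarrow> x \<in> Msp N"
  unfolding Msp_def mem_Collect_eq by (intro exI[of _ "\<lambda>_. 0"]) simp
lemma Msp_add: "x \<in> Msp N \<Longrightarrow> y \<in> Msp N \<Longrightarrow> x + y \<in> Msp N"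
proof -
  assume x: "x \<in> Msp N" and y: "y \<in> Msp N"
  from x obtain c where c: "S ^ N dvd (x - (\<Sum>i<N. lconst (c i) * W ^ i))" unfolding Msp_def by auto
  from y obtain d where d: "S ^ N dvd (y - (\<Sum>i<N. lconst (d i) * W ^ i))" unfolding Msp_def by auto
  have "(\<Sum>i<N. lconst (c i + d i) * W ^ i) = (\<Sum>i<N. lconst (c i) * W ^ i) + (\<Sum>i<N. lconst (d i) * W ^ i)"
    by (simp only: lconst_add distrib_right sum.distrib)
  then have e: "x + y - (\<Sum>i<N. lconst (c i + d i) * W ^ i) = (x - (\<Sum>i<N. lconst (c i) * W ^ i)) + (y - (\<Sum>i<N. lconst (d i) * W ^ i))"
    by (simp only: ab4)
  have "S ^ N dvd (x + y - (\<Sum>i<N. lconst (c i + d i) * W ^ i))" unfolding e by (rule dvd_add[OF c d])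
  then show ?thesis unfolding Msp_def mem_Collect_eq by (rule exI[of _ "\<lambda>i. c i + d i"])
qed

lemma Msp_smul: "x \<in> Msp N \<Longrightarrow> lconst z * x \<in> Msp N"
proof -
  assume "x \<in> Msp N"
  then obtain c where c: "S ^ N dvd (x - (\<Sum>i<N. lconst (c i) * W ^ i))" unfolding Msp_def by auto
  have e: "lconst z * x - (\<Sum>i<N. lconst (z * c i) * W ^ i) = lconst z * (x - (\<Sum>i<N. lconst (c i) * W ^ i))"
    by (simp only: lconst_mult sum_distrib_left right_diff_distrib mult.assoc)
  have "S ^ N dvd (lconst z * x - (\<Sum>i<N. lconst (z * c i) * W ^ i))" unfolding e by (rule dvd_mult[OF c])
  then show ?thesis unfolding Msp_def mem_Collect_eq by (rule exI[of _ "\<lambda>i. z * c i"])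
qed

lemma Msp_Wpow: "k < N \<Longrightarrow> W ^ k \<in> Msp N"
proof -
  assume k: "k < N"
  have "(\<Sum>i<N. lconst (if i = k then 1 else 0) * W ^ i) = (\<Sum>i<N. if i = k then W ^ i else 0)"
    by (intro sum.cong) auto
  also have "\<dots> = W ^ k" using k by simp
  finally have "S ^ N dvd (W ^ k - (\<Sum>i<N. lconst (if i = k then 1 else 0) * W ^ i))" by simp
  then show ?thesis unfolding Msp_def mem_Collect_eq by (rule exI[of _ "\<lambda>i. if i = k then 1 else 0"])
qed


lemma indep_step:
  assumes k: "k < N" and z: "\<forall>i<k. c i = 0"
    and d: "S ^ N dvd (\<Sum>i<N. lconst (c i) * W ^ i)"
  shows "c k = 0"
proof -
  have "(\<Sum>i<N. lconst (c i) * W ^ i) = (\<Sum>i\<in>{k..<N}. lconst (c i) * W ^ i)"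
    using z k by (intro sum.mono_neutral_right) auto
  also have "\<dots> = S ^ k * (\<Sum>i\<in>{k..<N}. lconst (c i) * S ^ (i - k) * V ^ i)"
    unfolding sum_distrib_left
  proof (rule sum.cong)
    fix i assume "i \<in> {k..<N}"
    then have "S ^ i = S ^ k * S ^ (i - k)" by (simp add: power_add[symmetric])
    then show "lconst (c i) * W ^ i = S ^ k * (lconst (c i) * S ^ (i - k) * V ^ i)"
      by (simp only: W_SV power_mult_distrib mult_ac)
  qed simp
  finally have e1: "(\<Sum>i<N. lconst (c i) * W ^ i) = S ^ k * (\<Sum>i\<in>{k..<N}. lconst (c i) * S ^ (i - k) * V ^ i)" .
  from d obtain q where "(\<Sum>i<N. lconst (c i) * W ^ i) = S ^ N * q" by blast
  moreover have "S ^ N = S ^ k * S ^ (N - k)" using k by (simp add: power_add[symmetric])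
  ultimately have "S ^ k * (\<Sum>i\<in>{k..<N}. lconst (c i) * S ^ (i - k) * V ^ i) = S ^ k * (S ^ (N - k) * q)"
    using e1 by (simp only: mult.assoc)
  then have e2: "(\<Sum>i\<in>{k..<N}. lconst (c i) * S ^ (i - k) * V ^ i) = S ^ (N - k) * q"
    using S_nonzero by simp
  have "ev1 (\<Sum>i\<in>{k..<N}. lconst (c i) * S ^ (i - k) * V ^ i) = (\<Sum>i\<in>{k..<N}. c i * 0 ^ (i - k) * 2 ^ i)"
    by (simp only: ev1_sum ev1_mult ev1_power ev1_lconst ev1_S ev1_V)
  also have "\<dots> = (\<Sum>i\<in>{k}. c i * 0 ^ (i - k) * 2 ^ i)"
    using k by (intro sum.mono_neutral_right) auto
  also have "\<dots> = c k * 2 ^ k" by simp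
  finally have "c k * 2 ^ k = ev1 (S ^ (N - k) * q)" using e2 by simp
  also have "\<dots> = 0" using k by (simp only: ev1_mult ev1_power ev1_S) simp
  finally show ?thesis by simp
qed

lemma indep:
  assumes d: "S ^ N dvd (\<Sum>i<N. lconst (c i) * W ^ i)"
  shows "\<forall>i<N. c i = 0"
proof -
  have "\<forall>i<k. c i = 0" if "k \<le> N" for k
    using that
  proof (induction k)
    case (Suc k)
    then show ?case using indep_step[of k N c] d by (auto simp: less_Suc_eq)
  qed simp
  then show ?thesis by blast
qed

lemma Msp_Spow: "S ^ (N - d) * q \<in> Msp N"
proof (induction d arbitrary: q)
  case 0 then show ?case by (intro Msp_dvd) simp
next
  case (Suc d)
  show ?case
  proof (cases "d < N")
    case False
    then have "N - Suc d = N - d" by simp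
    then show ?thesis using Suc by simp
  next
    case True
    define k where "k = N - Suc d"
    have kN: "k < N" and kd: "Suc k = N - d" using True unfolding k_def by auto
    obtain q' where q': "q - lconst (ev1 q) = S * q'" using s_dvd_ev1[of q] by blast
    obtain r where r: "V ^ k - lconst (2 ^ k) = S * r" using s_dvd_ev1[of "V ^ k"] by auto
    have Vk: "V ^ k = lconst (2 ^ k) + S * r" using r unfolding diff_eq_eq by (simp only: add.commute)
    have "W ^ k = S ^ k * V ^ k" by (simp only: W_SV power_mult_distrib)
    also have "\<dots> = lconst (2 ^ k) * S ^ k + S ^ Suc k * r" unfolding Vk power_Suc
      by (simp only: distrib_left mult_ac)
    finally have Wk: "W ^ k = lconst (2 ^ k) * S ^ k + S ^ Suc k * r" .
    have "lconst (2 ^ k) * S ^ k = W ^ k - S ^ Suc k * r" using Wk by simp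
    have "S ^ k = lconst (1 / 2 ^ k * 2 ^ k) * S ^ k" by simp
    also have "\<dots> = lconst (1 / 2 ^ k) * (lconst (2 ^ k) * S ^ k)" by (simp only: lconst_mult mult.assoc)
    also have "\<dots> = lconst (1 / 2 ^ k) * (W ^ k - S ^ Suc k * r)" using Wk by simp
    finally have Sk: "S ^ k = lconst (1 / 2 ^ k) * W ^ k - S ^ Suc k * (lconst (1 / 2 ^ k) * r)"
      by (simp only: right_diff_distrib mult_ac)
    have qq: "q = S * q' + lconst (ev1 q)" using q' unfolding diff_eq_eq .
    have "S ^ k * q = S ^ k * lconst (ev1 q) + S ^ Suc k * q'"
      by (subst qq) (simp only: distrib_left power_Suc mult_ac add_ac)
    also have "\<dots> = lconst (ev1 q / 2 ^ k) * W ^ k + S ^ Suc k * (q' - lconst (ev1 q / 2 ^ k) * r)"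
      by (subst Sk) (simp only: lconst_mult divide_inverse right_diff_distrib left_diff_distrib distrib_left mult_ac diff_add_eq lconst_one mult_1_left add_diff_eq)
    finally have eq: "S ^ k * q = lconst (ev1 q / 2 ^ k) * W ^ k + S ^ Suc k * (q' - lconst (ev1 q / 2 ^ k) * r)" .
    show ?thesis unfolding k_def[symmetric] eq
      using Msp_add Msp_smul Msp_Wpow[OF kN] Suc.IH[of "q' - lconst (ev1 q / 2 ^ k) * r"] kd by simp
  qed
qed

lemma span: "\<exists>c. S ^ N dvd (x - (\<Sum>i<N. lconst (c i) * W ^ i))"
  using Msp_Spow[of N N x] unfolding Msp_def by simp


definition cg :: "nat \<Rightarrow> lpoly \<Rightarrow> lpoly \<Rightarrow> bool" where
  "cg N a b \<longleftrightarrow> S ^ N dvd (a - b)"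

lemma cgI: "a = b + S ^ N * r \<Longrightarrow> cg N a b"
  unfolding cg_def by simp
lemma cg_refl[simp]: "cg N a a" unfolding cg_def by simp
lemma cg_sym: "cg N a b \<Longrightarrow> cg N b a"
  unfolding cg_def by (metis dvd_minus_iff minus_diff_eq)
lemma cg_trans: "cg N a b \<Longrightarrow> cg N b c \<Longrightarrow> cg N a c"
proof -
  assume "cg N a b" "cg N b c"
  then have "S ^ N dvd ((a - b) + (b - c))" unfolding cg_def by (rule dvd_add)
  then show ?thesis unfolding cg_def by simp
qed
lemma cg_add: "cg N a a' \<Longrightarrow> cg N b b' \<Longrightarrow> cg N (a + b) (a' + b')"
proof -
  assume "cg N a a'" "cg N b b'"
  then have "S ^ N dvd ((a - a') + (b - b'))" unfolding cg_def by (rule dvd_add)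
  then show ?thesis unfolding cg_def by (simp add: algebra_simps)
qed
lemma cg_diff: "cg N a a' \<Longrightarrow> cg N b b' \<Longrightarrow> cg N (a - b) (a' - b')"
proof -
  assume "cg N a a'" "cg N b b'"
  then have "S ^ N dvd ((a - a') - (b - b'))" unfolding cg_def by (rule dvd_diff)
  then show ?thesis unfolding cg_def by (simp add: algebra_simps)
qed
lemma cg_uminus: "cg N a a' \<Longrightarrow> cg N (- a) (- a')"
  unfolding cg_def by (metis dvd_minus_iff minus_diff_eq minus_diff_minus)
lemma cg_mult: "cg N a a' \<Longrightarrow> cg N b b' \<Longrightarrow> cg N (a * b) (a' * b')"
proof -
  assume "cg N a a'" "cg N b b'"
  then have "S ^ N dvd ((a - a') * b + a' * (b - b'))" unfolding cg_def
    by (intro dvd_add dvd_mult dvd_mult2)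
  then show ?thesis unfolding cg_def by (simp add: algebra_simps)
qed
lemma cg_0_iff: "cg N a 0 \<longleftrightarrow> S ^ N dvd a" unfolding cg_def by simp
lemma cg_linv: "cg N a b \<Longrightarrow> cg N (linv a) (linv b)"
  unfolding cg_def using dvd_linv[of N "a - b"] by simp

definition lc :: "nat \<Rightarrow> loop \<Rightarrow> loop \<Rightarrow> bool" where
  "lc N x y \<longleftrightarrow> cg N (fst x) (fst y) \<and> cg N (fst (snd x)) (fst (snd y)) \<and> cg N (snd (snd x)) (snd (snd y))"

lemma lc_refl[simp]: "lc N x x" unfolding lc_def by simp
lemma lc_sym: "lc N x y \<Longrightarrow> lc N y x" unfolding lc_def by (auto intro: cg_sym)
lemma lc_trans: "lc N x y \<Longrightarrow> lc N y z \<Longrightarrow> lc N x z" unfolding lc_def by (auto intro: cg_trans)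
lemma lc_add: "lc N x x' \<Longrightarrow> lc N y y' \<Longrightarrow> lc N (x + y) (x' + y')"
  unfolding lc_def by (auto intro: cg_add)
lemma lc_diff: "lc N x x' \<Longrightarrow> lc N y y' \<Longrightarrow> lc N (x - y) (x' - y')"
  unfolding lc_def by (auto intro: cg_diff)
lemma lc_sum: "(\<And>i. i \<in> A \<Longrightarrow> lc N (f i) (g i)) \<Longrightarrow> lc N (sum f A) (sum g A)"
  by (induction A rule: infinite_finite_induct) (auto intro: lc_add)

lemma lsmul_simps[simp]: "lsmul z (a, b, c) = (lconst z * a, lconst z * b, lconst z * c)"
  unfolding lsmul_def by simp
lemma lbr_simps[simp]: "lbr (a, b, c) (a', b', c') = (2 * (c * a' - a * c'), 2 * (b * c' - c * b'), a * b' - b * a')"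
  unfolding lbr_def by simp

lemma lc_lsmul: "lc N x x' \<Longrightarrow> lc N (lsmul z x) (lsmul z x')"
  by (cases x; cases x') (auto simp: lc_def intro: cg_mult)
lemma lc_lbr: "lc N x x' \<Longrightarrow> lc N y y' \<Longrightarrow> lc N (lbr x y) (lbr x' y')"
  by (cases x; cases x'; cases y; cases y') (auto simp: lc_def intro!: cg_mult cg_diff)

lemma OA_iff: "(p, p', q) \<in> OA \<longleftrightarrow> p' = linv p \<and> linv q = - q"
  unfolding OA_def by simp
lemma OA_add: "x \<in> OA \<Longrightarrow> y \<in> OA \<Longrightarrow> x + y \<in> OA"
  by (cases x; cases y) (auto simp: OA_iff)
lemma OA_zero[simp]: "0 \<in> OA"
  by (simp add: zero_prod_def OA_iff)
lemma OA_uminus: "x \<in> OA \<Longrightarrow> - x \<in> OA"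
  by (cases x) (auto simp: OA_iff)
lemma OA_diff: "x \<in> OA \<Longrightarrow> y \<in> OA \<Longrightarrow> x - y \<in> OA"
  by (cases x; cases y) (auto simp: OA_iff)
lemma OA_lsmul: "x \<in> OA \<Longrightarrow> lsmul z x \<in> OA"
  by (cases x) (auto simp: OA_iff)
lemma OA_lbr: "x \<in> OA \<Longrightarrow> y \<in> OA \<Longrightarrow> lbr x y \<in> OA"
  by (cases x; cases y) (auto simp: OA_iff algebra_simps)
lemma OA_sum: "(\<And>i. i \<in> A \<Longrightarrow> f i \<in> OA) \<Longrightarrow> sum f A \<in> OA"
  by (induction A rule: infinite_finite_induct) (auto intro: OA_add)

lemma qeqI: "x \<in> OA \<Longrightarrow> y \<in> OA \<Longrightarrow> lc (2 * l) x y \<Longrightarrow> qeq l x y"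
proof -
  assume h: "x \<in> OA" "y \<in> OA" "lc (2 * l) x y"
  obtain a b c where x: "x = (a, b, c)" by (cases x) auto
  obtain a' b' c' where y: "y = (a', b', c')" by (cases y) auto
  have "(a - a', b - b', c - c') \<in> OA" using OA_diff[OF h(1,2)] by (simp add: x y)
  then show ?thesis using h(3) unfolding qeq_def Iid_def lc_def cg_def x y by simp
qed

lemma Iid_D: "x \<in> Iid N \<Longrightarrow> S ^ N dvd fst x \<and> S ^ N dvd snd (snd x)"
  unfolding Iid_def by auto
lemma qeq_D: "qeq l x y \<Longrightarrow> cg (2 * l) (fst x) (fst y) \<and> cg (2 * l) (snd (snd x)) (snd (snd y))"
  unfolding qeq_def using Iid_D[of "x - y"] by (simp add: cg_def)



lemma geo_alt: "(1 + x) * (\<Sum>k\<in>{1..n}. (-1) ^ k * x ^ k) = - x - (- x) ^ Suc n"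
  for x :: "'a::comm_ring_1"
proof (induction n)
  case 0 then show ?case by simp
next
  case (Suc n)
  have "(1 + x) * (\<Sum>k\<in>{1..Suc n}. (-1) ^ k * x ^ k) = (1 + x) * (\<Sum>k\<in>{1..n}. (-1) ^ k * x ^ k) + (1 + x) * ((-1) ^ Suc n * x ^ Suc n)"
    by (simp add: distrib_left del: power_Suc)
  also have "\<dots> = - x - (- x) ^ Suc (Suc n)" unfolding Suc
    by (simp add: algebra_simps power_minus')
  finally show ?case .
qed

lemma lconst_m1pow: "lconst ((-1) ^ k) = (-1) ^ k"
  by (simp add: lconst_power lconst_uminus)

lemma lconst_num: "lconst a * numeral n = lconst (a * numeral n)"
  by (simp add: lconst_mult)

lemma fst_lsmul: "fst (lsmul z x) = lconst z * fst x" by (cases x) simp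
lemma snd1_lsmul: "fst (snd (lsmul z x)) = lconst z * fst (snd x)" by (cases x) simp
lemma snd2_lsmul: "snd (snd (lsmul z x)) = lconst z * snd (snd x)" by (cases x) simp

lemma Xsum_fst: assumes "l \<ge> 1" shows "fst (Xsum l) = 2 * W + S ^ (2 * l) * (2 * ltinv)"
proof -
  define T where "T = (\<Sum>k\<in>{1..2 * l - 1}. (-1) ^ k * S ^ k)"
  have f: "fst (Xsum l) = 2 * S - 2 * T"
    unfolding Xsum_def Xe_def T_def
    by (simp add: fst_sum fst_lsmul lconst_m1pow sum_distrib_left mult_ac)
  have "lt * T = - S - (- S) ^ Suc (2 * l - 1)" unfolding T_def using geo_alt[of S "2 * l - 1"] by simp
  also have "Suc (2 * l - 1) = 2 * l" using assms by simp
  finally have "lt * T = - S - (- S) ^ (2 * l)" .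
  also have "(- S) ^ (2 * l) = S ^ (2 * l)" by (simp only: power_mult power2_minus)
  finally have "lt * T = - S - S ^ (2 * l)" .
  then have "ltinv * (lt * T) = ltinv * (- S - S ^ (2 * l))" by simp
  then have T: "T = ltinv * (- S - S ^ (2 * l))" by (simp add: mult.assoc[symmetric])
  show ?thesis unfolding f T W_def
    by (simp add: algebra_simps)
qed

lemma Xsum_snd: assumes "l \<ge> 1" shows "fst (snd (Xsum l)) = - 2 * W + S ^ (2 * l) * (2 * lt * ltinv ^ (2 * l))"
proof -
  define u where "u = ltinv - 1"
  define T where "T = (\<Sum>k\<in>{1..2 * l - 1}. (-1) ^ k * u ^ k)"
  have f: "fst (snd (Xsum l)) = 2 * u - 2 * T"
    unfolding Xsum_def Xe_def T_def u_def
    by (simp add: snd_sum fst_sum snd1_lsmul lconst_m1pow sum_distrib_left mult_ac)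
  have "(1 + u) * T = - u - (- u) ^ Suc (2 * l - 1)" unfolding T_def using geo_alt[of u "2 * l - 1"] by simp
  also have "Suc (2 * l - 1) = 2 * l" using assms by simp
  finally have "(1 + u) * T = - u - (- u) ^ (2 * l)" .
  also have "(- u) ^ (2 * l) = u ^ (2 * l)" by (simp only: power_mult power2_minus)
  also have "1 + u = ltinv" unfolding u_def by simp
  finally have "ltinv * T = - u - u ^ (2 * l)" .
  then have "lt * (ltinv * T) = lt * (- u - u ^ (2 * l))" by simp
  then have T: "T = lt * (- u - u ^ (2 * l))" by (simp add: mult.assoc[symmetric])
  have uS: "u = - ltinv * S" unfolding u_def by (simp add: algebra_simps)
  have uN: "u ^ (2 * l) = S ^ (2 * l) * ltinv ^ (2 * l)"
  proof -
    have "u ^ (2 * l) = (- ltinv) ^ (2 * l) * S ^ (2 * l)" unfolding uS by (rule power_mult_distrib)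
    also have "(- ltinv) ^ (2 * l) = ltinv ^ (2 * l)" by (simp only: power_mult power2_minus)
    finally show ?thesis by (simp only: mult.commute)
  qed
  have "fst (snd (Xsum l)) = 2 * u + 2 * lt * u + 2 * lt * u ^ (2 * l)"
    unfolding f T by (simp add: algebra_simps)
  also have "2 * u + 2 * lt * u = - 2 * W" unfolding u_def W_def by (simp add: algebra_simps)
  finally show ?thesis unfolding uN by (simp add: mult_ac)
qed

lemma Xsum_thd: "snd (snd (Xsum l)) = 0"
  unfolding Xsum_def Xe_def by (simp add: snd_sum snd2_lsmul)

lemma Xsum_eq: assumes "l \<ge> 1"
  shows "Xsum l = (2 * W + S ^ (2 * l) * (2 * ltinv), - 2 * W + S ^ (2 * l) * (2 * lt * ltinv ^ (2 * l)), 0)"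
  using Xsum_fst[OF assms] Xsum_snd[OF assms] Xsum_thd[of l] by (simp add: prod_eq_iff)

lemma Ye1: "Ye 1 = (0, 0, - W)" unfolding Ye_def W_def by simp

definition EA :: "lpoly \<Rightarrow> loop" where "EA p = (p, - p, - p)"
definition FB :: "lpoly \<Rightarrow> loop" where "FB p = (p, - p, p)"
definition HC :: "lpoly \<Rightarrow> loop" where "HC p = (p, p, 0)"
abbreviation c4 :: lpoly where "c4 \<equiv> lconst (1/4)"
definition rho :: lpoly where "rho = c4 * W ^ 2"

lemma lc_tuple: "lc N (a, b, c) (a', b', c') \<longleftrightarrow> cg N a a' \<and> cg N b b' \<and> cg N c c'"
  unfolding lc_def by simp

lemma lconst_num2: "lconst a * (numeral n * x) = lconst (a * numeral n) * x"
  by (simp add: lconst_mult mult.assoc)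

lemma lconst_num3: "numeral n * lconst a = lconst (numeral n * a)"
  by (simp add: lconst_mult)

lemma E0_lc: assumes "l \<ge> 1" shows "lc (2 * l) (E0 l) (EA (c4 * W))"
  unfolding E0_def Xsum_eq[OF assms] Ye1 EA_def lc_tuple lsmul_simps add_Pair diff_Pair
proof (intro conjI)
  show "cg (2 * l) (lconst (1 / 4) * 0 + lconst (1 / 8) * (2 * W + S ^ (2 * l) * (2 * ltinv))) (c4 * W)"
    by (rule cgI[where r = "lconst (1/8) * (2 * ltinv)"]) (simp add: distrib_left right_diff_distrib lconst_num2 lconst_num3 mult_ac)
  show "cg (2 * l) (lconst (1 / 4) * 0 + lconst (1 / 8) * (- 2 * W + S ^ (2 * l) * (2 * lt * ltinv ^ (2 * l)))) (- (c4 * W))"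
    by (rule cgI[where r = "lconst (1/8) * (2 * lt * ltinv ^ (2 * l))"]) (simp add: distrib_left right_diff_distrib lconst_num2 lconst_num3 mult_ac)
  show "cg (2 * l) (lconst (1 / 4) * - W + lconst (1 / 8) * 0) (- (c4 * W))"
    by simp
qed

lemma F0_lc: assumes "l \<ge> 1" shows "lc (2 * l) (F0 l) (FB (- (c4 * W)))"
  unfolding F0_def Xsum_eq[OF assms] Ye1 FB_def lc_tuple lsmul_simps add_Pair diff_Pair
proof (intro conjI)
  show "cg (2 * l) (lconst (1 / 4) * 0 - lconst (1 / 8) * (2 * W + S ^ (2 * l) * (2 * ltinv))) (- (c4 * W))"
    by (rule cgI[where r = "- (lconst (1/8) * (2 * ltinv))"]) (simp add: distrib_left right_diff_distrib lconst_num2 lconst_num3 mult_ac)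
  show "cg (2 * l) (lconst (1 / 4) * 0 - lconst (1 / 8) * (- 2 * W + S ^ (2 * l) * (2 * lt * ltinv ^ (2 * l)))) (- (- (c4 * W)))"
    by (rule cgI[where r = "- (lconst (1/8) * (2 * lt * ltinv ^ (2 * l)))"]) (simp add: distrib_left right_diff_distrib lconst_num2 lconst_num3 mult_ac)
  show "cg (2 * l) (lconst (1 / 4) * - W - lconst (1 / 8) * 0) (- (c4 * W))"
    by simp
qed


lemma br_EF: "lbr (EA p) (FB q) = HC (- 4 * (p * q))"
  unfolding EA_def FB_def HC_def by (simp add: algebra_simps)
lemma br_HE: "lbr (HC p) (EA q) = EA (2 * (p * q))"
  unfolding EA_def HC_def by (simp add: algebra_simps)
lemma br_HF: "lbr (HC p) (FB q) = FB (- 2 * (p * q))"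
  unfolding FB_def HC_def by (simp add: algebra_simps)
lemma br_EE: "lbr (EA p) (EA q) = 0"
  unfolding EA_def by (simp add: algebra_simps zero_prod_def)
lemma br_FF: "lbr (FB p) (FB q) = 0"
  unfolding FB_def by (simp add: algebra_simps zero_prod_def)
lemma sm_EA: "lsmul z (EA p) = EA (lconst z * p)" unfolding EA_def by simp
lemma sm_FB: "lsmul z (FB p) = FB (lconst z * p)" unfolding FB_def by simp
lemma sm_HC: "lsmul z (HC p) = HC (lconst z * p)" unfolding HC_def by simp
lemma lc_EA: "cg N p q \<Longrightarrow> lc N (EA p) (EA q)" unfolding EA_def lc_tuple by (auto intro: cg_uminus)
lemma lc_FB: "cg N p q \<Longrightarrow> lc N (FB p) (FB q)" unfolding FB_def lc_tuple by (auto intro: cg_uminus)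
lemma lc_HC: "cg N p q \<Longrightarrow> lc N (HC p) (HC q)" unfolding HC_def lc_tuple by auto
lemma EA0: "EA 0 = 0" unfolding EA_def by (simp add: zero_prod_def)
lemma FB0: "FB 0 = 0" unfolding FB_def by (simp add: zero_prod_def)
lemma HC0: "HC 0 = 0" unfolding HC_def by (simp add: zero_prod_def)

lemma lconst_neg2: "lconst a * (- numeral n * x) = lconst (a * - numeral n) * x"
  by (simp add: lconst_mult lconst_uminus mult.assoc)

lemma lc_eq_trans: "lc N x y \<Longrightarrow> y = z \<Longrightarrow> lc N x z" by simp

context
  fixes l :: nat
  assumes l: "l \<ge> 1"
begin

lemma H1_lc: "lc (2 * l) (H1 l) (HC rho)"
proof -
  have "lc (2 * l) (H1 l) (lbr (EA (c4 * W)) (FB (- (c4 * W))))"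
    unfolding H1_def by (rule lc_lbr[OF E0_lc[OF l] F0_lc[OF l]])
  moreover have "lbr (EA (c4 * W)) (FB (- (c4 * W))) = HC rho"
  proof -
    have "- 4 * (c4 * W * - (c4 * W)) = (4 * c4 * c4) * W ^ 2" by (simp add: power2_eq_square mult_ac)
    also have "4 * c4 * c4 = c4" by (simp add: lconst_num3)
    finally have eq: "- 4 * (c4 * W * - (c4 * W)) = c4 * W ^ 2" by simp
    show ?thesis unfolding br_EF rho_def eq ..
  qed
  ultimately show ?thesis by simp
qed

lemma Eg_lc: "lc (2 * l) (Eg l j) (EA (c4 * W * rho ^ j))"
proof (induction j)
  case 0 then show ?case using E0_lc[OF l] by simp
next
  case (Suc j)
  have "lc (2 * l) (Eg l (Suc j)) (lsmul (1/2) (lbr (HC rho) (EA (c4 * W * rho ^ j))))"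
    by simp (rule lc_lsmul[OF lc_lbr[OF H1_lc Suc.IH]])
  moreover have "lsmul (1/2) (lbr (HC rho) (EA (c4 * W * rho ^ j))) = EA (c4 * W * rho ^ Suc j)"
    unfolding br_HE sm_EA lconst_num2 by (simp add: mult_ac)
  ultimately show ?case by simp
qed

lemma Fg_lc: "lc (2 * l) (Fg l j) (FB (- (c4 * W * rho ^ j)))"
proof (induction j)
  case 0 then show ?case using F0_lc[OF l] by simp
next
  case (Suc j)
  have "lc (2 * l) (Fg l (Suc j)) (lsmul (-1/2) (lbr (HC rho) (FB (- (c4 * W * rho ^ j)))))"
    by simp (rule lc_lsmul[OF lc_lbr[OF H1_lc Suc.IH]])
  moreover have "lsmul (-1/2) (lbr (HC rho) (FB (- (c4 * W * rho ^ j)))) = FB (- (c4 * W * rho ^ Suc j))"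
    unfolding br_HF sm_FB lconst_neg2 by (simp add: mult_ac)
  ultimately show ?case by simp
qed

lemma EF_lc: "lc (2 * l) (lbr (Eg l j) (Fg l k)) (HC (rho ^ (j + k + 1)))"
proof -
  have "lc (2 * l) (lbr (Eg l j) (Fg l k)) (lbr (EA (c4 * W * rho ^ j)) (FB (- (c4 * W * rho ^ k))))"
    by (rule lc_lbr[OF Eg_lc Fg_lc])
  moreover have "lbr (EA (c4 * W * rho ^ j)) (FB (- (c4 * W * rho ^ k))) = HC (rho ^ (j + k + 1))"
  proof -
    have "- 4 * (c4 * W * rho ^ j * - (c4 * W * rho ^ k)) = (4 * c4 * c4) * (W ^ 2 * rho ^ j * rho ^ k)"
      by (simp add: power2_eq_square mult_ac)
    also have "4 * c4 * c4 = c4" by (simp add: lconst_num3)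
    finally have eq: "- 4 * (c4 * W * rho ^ j * - (c4 * W * rho ^ k)) = c4 * (W ^ 2 * rho ^ j * rho ^ k)" by simp
    have eq2: "c4 * (W ^ 2 * rho ^ j * rho ^ k) = rho ^ (j + k + 1)"
      by (simp add: rho_def power_add mult_ac)
    show ?thesis unfolding br_EF eq eq2 ..
  qed
  ultimately show ?thesis by simp
qed

lemma Hg_lc: "lc (2 * l) (Hg l m) (HC (rho ^ m))"
proof (cases "m = 0")
  case True
  have "H0 = HC 1" unfolding H0_def Xe_def HC_def by (simp add: lconst_num)
  then show ?thesis using True by (simp add: Hg_def)
next
  case False
  define j where "j = min (m - 1) (l - 1)"
  have "Hg l m = lbr (Eg l j) (Fg l (m - 1 - j))" using False unfolding Hg_def j_def by (simp add: Let_def)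
  moreover have "j + (m - 1 - j) + 1 = m" using False unfolding j_def by simp
  ultimately show ?thesis using EF_lc[of j "m - 1 - j"] by simp
qed

end


lemma sum_even_odd: "(\<Sum>i<2 * n. f i) = (\<Sum>j<n. f (2 * j) + f (2 * j + 1))"
  for f :: "nat \<Rightarrow> 'a::comm_monoid_add"
  by (induction n) (simp_all add: add_ac)

lemma Xe_OA: "Xe k \<in> OA" unfolding Xe_def OA_iff by simp
lemma Ye_OA: "Ye k \<in> OA" unfolding Ye_def OA_iff by (simp add: algebra_simps)
lemma Xsum_OA: "Xsum l \<in> OA"
  unfolding Xsum_def by (intro OA_diff Xe_OA OA_sum OA_lsmul)
lemma E0_OA: "E0 l \<in> OA" unfolding E0_def by (intro OA_add OA_lsmul Ye_OA Xsum_OA)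
lemma F0_OA: "F0 l \<in> OA" unfolding F0_def by (intro OA_diff OA_lsmul Ye_OA Xsum_OA)
lemma H1_OA: "H1 l \<in> OA" unfolding H1_def by (intro OA_lbr E0_OA F0_OA)
lemma Eg_OA: "Eg l j \<in> OA" by (induction j) (simp_all add: E0_OA OA_lsmul OA_lbr H1_OA)
lemma Fg_OA: "Fg l j \<in> OA" by (induction j) (simp_all add: F0_OA OA_lsmul OA_lbr H1_OA)
lemma H0_OA: "H0 \<in> OA" unfolding H0_def by (intro OA_lsmul Xe_OA)
lemma Hg_OA: "Hg l m \<in> OA" unfolding Hg_def by (simp add: Let_def H0_OA OA_lbr Eg_OA Fg_OA)
lemma Et_OA: "Et l m \<in> OA" unfolding Et_def by (simp add: Eg_OA)
lemma Ft_OA: "Ft l m \<in> OA" unfolding Ft_def by (simp add: Fg_OA)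
lemma Ht_OA: "Ht l m \<in> OA" unfolding Ht_def by (simp add: Hg_OA)

lemma qeqI2:
  assumes "x \<in> OA" "y \<in> OA" "cg (2 * l) (fst x) (fst y)" "cg (2 * l) (snd (snd x)) (snd (snd y))"
  shows "qeq l x y"
proof -
  obtain a b c where x: "x = (a, b, c)" by (cases x) auto
  obtain a' b' c' where y: "y = (a', b', c')" by (cases y) auto
  have "b = linv a" "b' = linv a'" using assms(1,2) by (auto simp: x y OA_iff)
  then have "cg (2 * l) b b'" using cg_linv assms(3) by (simp add: x y)
  then show ?thesis using assms by (intro qeqI) (simp_all add: lc_def x y)
qed

lemma qeqI3: "x \<in> OA \<Longrightarrow> y \<in> OA \<Longrightarrow> lc (2 * l) x y \<Longrightarrow> qeq l x y"
  by (rule qeqI)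

lemma W_pow_dvd: "N \<le> n \<Longrightarrow> S ^ N dvd W ^ n"
proof -
  assume "N \<le> n"
  then have "S ^ N dvd S ^ n" by (rule le_imp_power_dvd)
  then show ?thesis unfolding W_SV power_mult_distrib by (rule dvd_mult2)
qed

lemma rho_pow: "rho ^ j = lconst ((1/4) ^ j) * W ^ (2 * j)"
  by (simp only: rho_def power_mult_distrib power_mult lconst_power)
lemma cWrho_pow: "c4 * W * rho ^ j = lconst ((1/4) ^ (j + 1)) * W ^ (2 * j + 1)"
  unfolding rho_pow by (simp only: power_add power_one_right lconst_mult mult_ac)

lemma rho_van: "l \<le> m \<Longrightarrow> cg (2 * l) (rho ^ m) 0"
  unfolding cg_0_iff rho_pow by (intro dvd_mult W_pow_dvd) simp
lemma cWrho_van: "l \<le> m \<Longrightarrow> cg (2 * l) (c4 * W * rho ^ m) 0"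
  unfolding cg_0_iff cWrho_pow by (intro dvd_mult W_pow_dvd) simp

context
  fixes l :: nat
  assumes l: "l \<ge> 1"
begin

lemma Et_lc: "lc (2 * l) (Et l j) (EA (c4 * W * rho ^ j))"
proof (cases "j < l")
  case True then show ?thesis using Eg_lc[OF l] by (simp add: Et_def)
next
  case False
  then have "lc (2 * l) (EA 0) (EA (c4 * W * rho ^ j))" by (intro lc_EA cg_sym[OF cWrho_van]) simp
  then show ?thesis using False by (simp add: Et_def EA0)
qed

lemma Ft_lc: "lc (2 * l) (Ft l j) (FB (- (c4 * W * rho ^ j)))"
proof (cases "j < l")
  case True then show ?thesis using Fg_lc[OF l] by (simp add: Ft_def)
next
  case False
  then have "lc (2 * l) (FB 0) (FB (- (c4 * W * rho ^ j)))"
    using cg_uminus[OF cWrho_van[of l j]] False by (intro lc_FB cg_sym[of _ _ 0]) simp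
  then show ?thesis using False by (simp add: Ft_def FB0)
qed

lemma Ht_lc: "lc (2 * l) (Ht l j) (HC (rho ^ j))"
proof (cases "j < l")
  case True then show ?thesis using Hg_lc[OF l] by (simp add: Ht_def)
next
  case False
  then have "lc (2 * l) (HC 0) (HC (rho ^ j))" by (intro lc_HC cg_sym[OF rho_van]) simp
  then show ?thesis using False by (simp add: Ht_def HC0)
qed

end


definition comb :: "nat \<Rightarrow> (nat \<Rightarrow> complex) \<Rightarrow> (nat \<Rightarrow> complex) \<Rightarrow> (nat \<Rightarrow> complex) \<Rightarrow> loop" where
  "comb l a b c = (\<Sum>j<l. lsmul (a j) (Eg l j) + lsmul (b j) (Fg l j) + lsmul (c j) (Hg l j))"

definition dF :: "(nat \<Rightarrow> complex) \<Rightarrow> (nat \<Rightarrow> complex) \<Rightarrow> (nat \<Rightarrow> complex) \<Rightarrow> nat \<Rightarrow> complex" where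
  "dF a b c i = (if even i then c (i div 2) * (1/4) ^ (i div 2) else (a (i div 2) - b (i div 2)) * (1/4) ^ (i div 2 + 1))"
definition dT :: "(nat \<Rightarrow> complex) \<Rightarrow> (nat \<Rightarrow> complex) \<Rightarrow> nat \<Rightarrow> complex" where
  "dT a b i = (if even i then 0 else - (a (i div 2) + b (i div 2)) * (1/4) ^ (i div 2 + 1))"

lemma comb_OA: "comb l a b c \<in> OA"
  unfolding comb_def by (intro OA_sum OA_add OA_lsmul Eg_OA Fg_OA Hg_OA)

lemma fst_EA[simp]: "fst (EA p) = p" and thd_EA[simp]: "snd (snd (EA p)) = - p"
  and fst_FB[simp]: "fst (FB p) = p" and thd_FB[simp]: "snd (snd (FB p)) = p"
  and fst_HC[simp]: "fst (HC p) = p" and thd_HC[simp]: "snd (snd (HC p)) = 0"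
  by (simp_all add: EA_def FB_def HC_def)

lemma gF: "lconst a * (lconst K1 * X) + lconst b * (- (lconst K1 * X)) + lconst c * (lconst K0 * Y) = lconst (c * K0) * Y + lconst ((a - b) * K1) * X"
  by (simp add: lconst_mult lconst_diff algebra_simps)
lemma gT: "- (lconst a * (lconst K1 * X)) + lconst b * (- (lconst K1 * X)) + 0 = lconst 0 * Y + lconst (- (a + b) * K1) * X"
proof -
  have e: "lconst (- (a + b) * K1) = - (lconst a + lconst b) * lconst K1" by (simp only: lconst_mult lconst_uminus lconst_add)
  show ?thesis unfolding e lconst_zero by (simp add: algebra_simps)
qed

context
  fixes l :: nat
  assumes l: "l \<ge> 1"
begin

definition combR where
  "combR a b c = (\<Sum>j<l. EA (lconst (a j) * (c4 * W * rho ^ j)) + FB (lconst (b j) * (- (c4 * W * rho ^ j))) + HC (lconst (c j) * rho ^ j))"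

lemma comb_lc: "lc (2 * l) (comb l a b c) (combR a b c)"
  unfolding comb_def combR_def sm_EA[symmetric] sm_FB[symmetric] sm_HC[symmetric]
  by (intro lc_sum lc_add lc_lsmul Eg_lc[OF l] Fg_lc[OF l] Hg_lc[OF l])

lemma combR_fst: "fst (combR a b c) = (\<Sum>i<2 * l. lconst (dF a b c i) * W ^ i)"
  unfolding sum_even_odd combR_def fst_sum
proof (rule sum.cong)
  fix j :: nat
  have e1: "(2 * j) div 2 = j" "(2 * j + 1) div 2 = j" "even (2 * j)" "\<not> even (2 * j + 1)" by simp_all
  show "fst (EA (lconst (a j) * (c4 * W * rho ^ j)) + FB (lconst (b j) * - (c4 * W * rho ^ j)) + HC (lconst (c j) * rho ^ j))
     = lconst (dF a b c (2 * j)) * W ^ (2 * j) + lconst (dF a b c (2 * j + 1)) * W ^ (2 * j + 1)"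
    unfolding dF_def e1(1,2) if_P[OF e1(3)] if_not_P[OF e1(4)] fst_add fst_EA fst_FB fst_HC unfolding cWrho_pow unfolding rho_pow
    by (rule gF)
qed simp

lemma combR_thd: "snd (snd (combR a b c)) = (\<Sum>i<2 * l. lconst (dT a b i) * W ^ i)"
  unfolding sum_even_odd combR_def snd_sum
proof (rule sum.cong)
  fix j :: nat
  have e1: "(2 * j) div 2 = j" "(2 * j + 1) div 2 = j" "even (2 * j)" "\<not> even (2 * j + 1)" by simp_all
  show "snd (snd (EA (lconst (a j) * (c4 * W * rho ^ j)) + FB (lconst (b j) * - (c4 * W * rho ^ j)) + HC (lconst (c j) * rho ^ j)))
     = lconst (dT a b (2 * j)) * W ^ (2 * j) + lconst (dT a b (2 * j + 1)) * W ^ (2 * j + 1)"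
    unfolding dT_def e1(1,2) if_P[OF e1(3)] if_not_P[OF e1(4)] snd_add thd_EA thd_FB thd_HC unfolding cWrho_pow
    by (rule gT)
qed simp

end


context
  fixes l :: nat
  assumes l: "l \<ge> 1"
begin

lemma cg_combR_fst: "cg (2 * l) (fst (comb l a b c)) (fst (combR l a b c))"
  using comb_lc[OF l] unfolding lc_def by blast
lemma cg_combR_thd: "cg (2 * l) (snd (snd (comb l a b c))) (snd (snd (combR l a b c)))"
  using comb_lc[OF l] unfolding lc_def by blast

lemma indep_comb:
  assumes "comb l a b c \<in> Iid (2 * l)"
  shows "\<forall>j<l. a j = 0 \<and> b j = 0 \<and> c j = 0"
proof -
  have d1: "S ^ (2 * l) dvd fst (comb l a b c)" and d2: "S ^ (2 * l) dvd snd (snd (comb l a b c))"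
    using Iid_D[OF assms] by auto
  have "cg (2 * l) (fst (combR l a b c)) 0"
    using cg_trans[OF cg_sym[OF cg_combR_fst] d1[folded cg_0_iff]] .
  then have "S ^ (2 * l) dvd (\<Sum>i<2 * l. lconst (dF a b c i) * W ^ i)"
    unfolding cg_0_iff combR_fst[OF l] .
  then have F: "\<forall>i<2 * l. dF a b c i = 0" by (rule indep)
  have "cg (2 * l) (snd (snd (combR l a b c))) 0"
    using cg_trans[OF cg_sym[OF cg_combR_thd] d2[folded cg_0_iff]] .
  then have "S ^ (2 * l) dvd (\<Sum>i<2 * l. lconst (dT a b i) * W ^ i)"
    unfolding cg_0_iff combR_thd[OF l] .
  then have T: "\<forall>i<2 * l. dT a b i = 0" by (rule indep)
  show ?thesis
  proof (intro allI impI)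
    fix j assume j: "j < l"
    have "dF a b c (2 * j) = 0" "dF a b c (2 * j + 1) = 0" "dT a b (2 * j + 1) = 0"
      using F T j by auto
    then have h: "c j = 0" "a j - b j = 0" "a j + b j = 0"
      unfolding dF_def dT_def by simp_all
    then have "a j = b j" by simp
    then have "2 * a j = 0" using h(3) by simp
    then show "a j = 0 \<and> b j = 0 \<and> c j = 0" using h \<open>a j = b j\<close> by simp
  qed
qed


lemma even_zero:
  assumes q: "linv q = - q" and e: "S ^ (2 * l) dvd (q - (\<Sum>i<2 * l. lconst (e i) * W ^ i))"
  shows "\<forall>i<2 * l. even i \<longrightarrow> e i = 0"
proof -
  define Q where "Q = (\<Sum>i<2 * l. lconst (e i) * W ^ i)"
  have "S ^ (2 * l) dvd linv (q - Q)" using dvd_linv[OF e] unfolding Q_def .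
  then have "S ^ (2 * l) dvd (- q - linv Q)" using q by simp
  then have h: "S ^ (2 * l) dvd ((q - Q) + (- q - linv Q))" using e unfolding Q_def by (intro dvd_add)
  have eq: "(q - Q) + (- q - linv Q) = - (Q + linv Q)" by simp
  have "S ^ (2 * l) dvd - (Q + linv Q)" using h unfolding eq .
  then have "S ^ (2 * l) dvd (Q + linv Q)" by (simp only: dvd_minus_iff)
  have lQ: "linv Q = (\<Sum>i<2 * l. lconst (e i) * (- W) ^ i)"
    unfolding Q_def linv_sum linv_mult linv_lconst linv_power linv_W ..
  have pt: "lconst (e i) * W ^ i + lconst (e i) * (- W) ^ i = lconst (e i * (1 + (-1) ^ i)) * W ^ i" for i
  proof -
    have "lconst (e i * (1 + (-1) ^ i)) = lconst (e i) * (1 + (-1) ^ i)"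
      by (simp only: lconst_mult lconst_add lconst_m1pow lconst_one)
    moreover have "(- W) ^ i = (-1) ^ i * W ^ i" by (rule power_minus)
    ultimately show ?thesis by (simp only: distrib_left distrib_right mult_1_left mult_1_right mult_ac)
  qed
  have "Q + linv Q = (\<Sum>i<2 * l. lconst (e i) * W ^ i + lconst (e i) * (- W) ^ i)"
    unfolding lQ unfolding Q_def by (rule sum.distrib[symmetric])
  also have "\<dots> = (\<Sum>i<2 * l. lconst (e i * (1 + (-1) ^ i)) * W ^ i)" unfolding pt ..
  finally have "S ^ (2 * l) dvd (\<Sum>i<2 * l. lconst (e i * (1 + (-1) ^ i)) * W ^ i)"
    using \<open>S ^ (2 * l) dvd (Q + linv Q)\<close> by (simp only:)
  then have z: "\<forall>i<2 * l. e i * (1 + (-1) ^ i) = 0" by (rule indep)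
  show ?thesis
  proof (intro allI impI)
    fix i assume "i < 2 * l" "even i"
    then have "e i * (1 + (-1) ^ i) = 0" "(-1::complex) ^ i = 1" using z by auto
    then show "e i = 0" by simp
  qed
qed
lemma span_comb:
  assumes x: "x \<in> OA"
  shows "\<exists>a b c. qeq l x (comb l a b c)"
proof -
  obtain p q where xe: "x = (p, linv p, q)" and q: "linv q = - q"
    using x unfolding OA_def by auto
  obtain d where d: "S ^ (2 * l) dvd (p - (\<Sum>i<2 * l. lconst (d i) * W ^ i))" using span by blast
  obtain e where e: "S ^ (2 * l) dvd (q - (\<Sum>i<2 * l. lconst (e i) * W ^ i))" using span by blast
  have ez: "\<forall>i<2 * l. even i \<longrightarrow> e i = 0" by (rule even_zero[OF q e])
  define a where "a j = (4 ^ (j + 1) * d (2 * j + 1) - 4 ^ (j + 1) * e (2 * j + 1)) / 2" for j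
  define b where "b j = (- (4 ^ (j + 1)) * d (2 * j + 1) - 4 ^ (j + 1) * e (2 * j + 1)) / 2" for j
  define c where "c j = 4 ^ j * d (2 * j)" for j
  have dFe: "dF a b c i = d i" for i
  proof (cases "even i")
    case True
    then obtain j where i: "i = 2 * j" by blast
    show ?thesis unfolding dF_def i c_def by (simp add: power_one_over)
  next
    case False
    then obtain j where i: "i = 2 * j + 1" using oddE by blast
    show ?thesis unfolding dF_def i a_def b_def by (simp add: power_one_over field_simps)
  qed
  have dTe: "dT a b i = e i" if "i < 2 * l" for i
  proof (cases "even i")
    case True
    then show ?thesis using ez that unfolding dT_def by simp
  next
    case False
    then obtain j where i: "i = 2 * j + 1" using oddE by blast
    show ?thesis unfolding dT_def i a_def b_def by (simp add: power_one_over field_simps)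
  qed
  have "cg (2 * l) p (fst (combR l a b c))"
    unfolding combR_fst[OF l] dFe using d unfolding cg_def .
  then have c1: "cg (2 * l) (fst x) (fst (comb l a b c))"
    unfolding xe fst_conv by (rule cg_trans[OF _ cg_sym[OF cg_combR_fst]])
  have "(\<Sum>i<2 * l. lconst (dT a b i) * W ^ i) = (\<Sum>i<2 * l. lconst (e i) * W ^ i)"
    using dTe by (intro sum.cong) auto
  then have "cg (2 * l) q (snd (snd (combR l a b c)))"
    unfolding combR_thd[OF l] cg_def using e by (simp only:)
  then have c2: "cg (2 * l) (snd (snd x)) (snd (snd (comb l a b c)))"
    unfolding xe snd_conv by (rule cg_trans[OF _ cg_sym[OF cg_combR_thd]])
  show ?thesis using qeqI2[OF x comb_OA c1 c2] by blast
qed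

end


lemma br_EAFB: "lbr (EA (c4 * W * rho ^ j)) (FB (- (c4 * W * rho ^ k))) = HC (rho ^ (j + k + 1))"
proof -
  have "- 4 * (c4 * W * rho ^ j * - (c4 * W * rho ^ k)) = (4 * c4 * c4) * (W ^ 2 * rho ^ j * rho ^ k)"
    by (simp add: power2_eq_square mult_ac)
  also have "4 * c4 * c4 = c4" by (simp add: lconst_num3)
  finally have eq: "- 4 * (c4 * W * rho ^ j * - (c4 * W * rho ^ k)) = c4 * (W ^ 2 * rho ^ j * rho ^ k)" by simp
  have eq2: "c4 * (W ^ 2 * rho ^ j * rho ^ k) = rho ^ (j + k + 1)"
    by (simp add: rho_def power_add mult_ac)
  show ?thesis unfolding br_EF eq eq2 ..
qed

lemma br_HEt: "lbr (HC (rho ^ j)) (EA (c4 * W * rho ^ k)) = lsmul 2 (EA (c4 * W * rho ^ (j + k)))"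
  unfolding br_HE sm_EA by (simp add: power_add mult_ac)

lemma br_HFt: "lbr (HC (rho ^ j)) (FB (- (c4 * W * rho ^ k))) = lsmul (-2) (FB (- (c4 * W * rho ^ (j + k))))"
  unfolding br_HF sm_FB by (simp add: power_add mult_ac lconst_uminus)

theorem theorem4:
  fixes l :: nat
  assumes "l \<ge> 1"
  shows
    \<comment> \<open>all the elements lie in OA\<close>
    "(\<forall>j. Eg l j \<in> OA \<and> Fg l j \<in> OA \<and> Hg l j \<in> OA)
     \<comment> \<open>(i)\<close>
   \<and> (\<forall>j k. j \<le> l - 2 \<and> 1 \<le> k \<and> k \<le> l - 1 \<longrightarrow>
        qeq l (lbr (Eg l (Suc j)) (Fg l (k - 1))) (lbr (Eg l j) (Fg l k)))
   \<and> (\<forall>m j k. 1 \<le> m \<and> m \<le> 2 * l - 1 \<and> j \<le> l - 1 \<and> k \<le> l - 1 \<and> j + k + 1 = m \<longrightarrow>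
        qeq l (lbr (Eg l j) (Fg l k)) (Hg l m))
   \<and> qeq l (Hg l 1) (H1 l)
     \<comment> \<open>(ii): linear independence and spanning modulo the ideal\<close>
   \<and> (\<forall>a b c :: nat \<Rightarrow> complex.
        (\<Sum>j<l. lsmul (a j) (Eg l j) + lsmul (b j) (Fg l j) + lsmul (c j) (Hg l j)) \<in> Iid (2 * l)
        \<longrightarrow> (\<forall>j<l. a j = 0 \<and> b j = 0 \<and> c j = 0))
   \<and> (\<forall>x \<in> OA. \<exists>a b c :: nat \<Rightarrow> complex.
        qeq l x (\<Sum>j<l. lsmul (a j) (Eg l j) + lsmul (b j) (Fg l j) + lsmul (c j) (Hg l j)))
   \<and> (\<forall>m. l \<le> m \<and> m \<le> 2 * l - 1 \<longrightarrow> qeq l (Hg l m) 0)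
     \<comment> \<open>(iii)\<close>
   \<and> (\<forall>j k. j \<le> l - 1 \<and> k \<le> l - 1 \<longrightarrow>
        qeq l (lbr (Et l j) (Ft l k)) (Ht l (j + k + 1))
      \<and> qeq l (lbr (Ht l j) (Et l k)) (lsmul 2 (Et l (j + k)))
      \<and> qeq l (lbr (Ht l j) (Ft l k)) (lsmul (-2) (Ft l (j + k)))
      \<and> qeq l (lbr (Et l j) (Et l k)) 0
      \<and> qeq l (lbr (Ft l j) (Ft l k)) 0)"
proof -
  note l = assms
  have P0: "\<forall>j. Eg l j \<in> OA \<and> Fg l j \<in> OA \<and> Hg l j \<in> OA"
    by (simp add: Eg_OA Fg_OA Hg_OA)
  have P1: "\<forall>j k. j \<le> l - 2 \<and> 1 \<le> k \<and> k \<le> l - 1 \<longrightarrow>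
        qeq l (lbr (Eg l (Suc j)) (Fg l (k - 1))) (lbr (Eg l j) (Fg l k))"
  proof (intro allI impI)
    fix j k assume h: "j \<le> l - 2 \<and> 1 \<le> k \<and> k \<le> l - 1"
    have e: "Suc j + (k - 1) + 1 = j + k + 1" using h by simp
    show "qeq l (lbr (Eg l (Suc j)) (Fg l (k - 1))) (lbr (Eg l j) (Fg l k))"
      by (intro qeqI OA_lbr Eg_OA Fg_OA lc_trans[OF EF_lc[OF l, of "Suc j" "k - 1"]])
         (unfold e, rule lc_sym[OF EF_lc[OF l]])
  qed
  have P2: "\<forall>m j k. 1 \<le> m \<and> m \<le> 2 * l - 1 \<and> j \<le> l - 1 \<and> k \<le> l - 1 \<and> j + k + 1 = m \<longrightarrow>
        qeq l (lbr (Eg l j) (Fg l k)) (Hg l m)"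
  proof (intro allI impI)
    fix m j k assume h: "1 \<le> m \<and> m \<le> 2 * l - 1 \<and> j \<le> l - 1 \<and> k \<le> l - 1 \<and> j + k + 1 = m"
    show "qeq l (lbr (Eg l j) (Fg l k)) (Hg l m)"
    proof -
      have m: "m = j + k + 1" using h by simp
      show ?thesis unfolding m
        by (intro qeqI OA_lbr Eg_OA Fg_OA Hg_OA lc_trans[OF EF_lc[OF l, of j k] lc_sym[OF Hg_lc[OF l]]])
    qed
  qed
  have "Hg l 1 = H1 l" unfolding Hg_def H1_def by simp
  then have P3: "qeq l (Hg l 1) (H1 l)" by (intro qeqI Hg_OA H1_OA) simp
  have P4: "\<forall>a b c :: nat \<Rightarrow> complex.
        (\<Sum>j<l. lsmul (a j) (Eg l j) + lsmul (b j) (Fg l j) + lsmul (c j) (Hg l j)) \<in> Iid (2 * l)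
        \<longrightarrow> (\<forall>j<l. a j = 0 \<and> b j = 0 \<and> c j = 0)"
    using indep_comb[OF l] unfolding comb_def by blast
  have P5: "\<forall>x \<in> OA. \<exists>a b c :: nat \<Rightarrow> complex.
        qeq l x (\<Sum>j<l. lsmul (a j) (Eg l j) + lsmul (b j) (Fg l j) + lsmul (c j) (Hg l j))"
    using span_comb[OF l] unfolding comb_def by blast
  have P6: "\<forall>m. l \<le> m \<and> m \<le> 2 * l - 1 \<longrightarrow> qeq l (Hg l m) 0"
  proof (intro allI impI)
    fix m assume h: "l \<le> m \<and> m \<le> 2 * l - 1"
    have "lc (2 * l) (HC (rho ^ m)) (HC 0)" using h by (intro lc_HC rho_van) simp
    then have "lc (2 * l) (Hg l m) 0" unfolding HC0 by (rule lc_trans[OF Hg_lc[OF l]])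
    then show "qeq l (Hg l m) 0" by (intro qeqI Hg_OA OA_zero)
  qed
  have P7: "\<forall>j k. j \<le> l - 1 \<and> k \<le> l - 1 \<longrightarrow>
        qeq l (lbr (Et l j) (Ft l k)) (Ht l (j + k + 1))
      \<and> qeq l (lbr (Ht l j) (Et l k)) (lsmul 2 (Et l (j + k)))
      \<and> qeq l (lbr (Ht l j) (Ft l k)) (lsmul (-2) (Ft l (j + k)))
      \<and> qeq l (lbr (Et l j) (Et l k)) 0
      \<and> qeq l (lbr (Ft l j) (Ft l k)) 0"
  proof (intro allI impI conjI)
    fix j k
    show "qeq l (lbr (Et l j) (Ft l k)) (Ht l (j + k + 1))"
    proof (intro qeqI OA_lbr Et_OA Ft_OA Ht_OA)
      have "lc (2 * l) (lbr (Et l j) (Ft l k)) (HC (rho ^ (j + k + 1)))"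
        using lc_lbr[OF Et_lc[OF l] Ft_lc[OF l], of j k] unfolding br_EAFB .
      then show "lc (2 * l) (lbr (Et l j) (Ft l k)) (Ht l (j + k + 1))"
        by (rule lc_trans[OF _ lc_sym[OF Ht_lc[OF l]]])
    qed
    show "qeq l (lbr (Ht l j) (Et l k)) (lsmul 2 (Et l (j + k)))"
    proof (intro qeqI OA_lbr OA_lsmul Et_OA Ht_OA)
      have "lc (2 * l) (lbr (Ht l j) (Et l k)) (lsmul 2 (EA (c4 * W * rho ^ (j + k))))"
        using lc_lbr[OF Ht_lc[OF l] Et_lc[OF l], of j k] unfolding br_HEt .
      then show "lc (2 * l) (lbr (Ht l j) (Et l k)) (lsmul 2 (Et l (j + k)))"
        by (rule lc_trans[OF _ lc_lsmul[OF lc_sym[OF Et_lc[OF l]]]])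
    qed
    show "qeq l (lbr (Ht l j) (Ft l k)) (lsmul (-2) (Ft l (j + k)))"
    proof (intro qeqI OA_lbr OA_lsmul Ft_OA Ht_OA)
      have "lc (2 * l) (lbr (Ht l j) (Ft l k)) (lsmul (-2) (FB (- (c4 * W * rho ^ (j + k)))))"
        using lc_lbr[OF Ht_lc[OF l] Ft_lc[OF l], of j k] unfolding br_HFt .
      then show "lc (2 * l) (lbr (Ht l j) (Ft l k)) (lsmul (-2) (Ft l (j + k)))"
        by (rule lc_trans[OF _ lc_lsmul[OF lc_sym[OF Ft_lc[OF l]]]])
    qed
    show "qeq l (lbr (Et l j) (Et l k)) 0"
    proof (intro qeqI OA_lbr Et_OA OA_zero)
      show "lc (2 * l) (lbr (Et l j) (Et l k)) 0"
        using lc_lbr[OF Et_lc[OF l] Et_lc[OF l], of j k] unfolding br_EE .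
    qed
    show "qeq l (lbr (Ft l j) (Ft l k)) 0"
    proof (intro qeqI OA_lbr Ft_OA OA_zero)
      show "lc (2 * l) (lbr (Ft l j) (Ft l k)) 0"
        using lc_lbr[OF Ft_lc[OF l] Ft_lc[OF l], of j k] unfolding br_FF .
    qed
  qed
  show ?thesis using P0 P1 P2 P3 P4 P5 P6 P7 by blast
qed


end
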